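(* Let $m,a,b,t\in\mathbb{N}$ with $m\geq 3$, $a\geq 1$, $t\in\{2,\ldots,m-1\}$ and $(t-1)(am+1)<bm+t<t(am+1)$, and let $S=\langle m,\ am+1,\ bm+t\rangle$ (a MANS-semigroup with embedding dimension $3$). Then \[ \mathrm{g}(S)=\frac{qt(t-1)+r(r+1)}{2m}(am+1)+\frac{qt(q-1)+2q(r+1)}{2m}(bm+t)-\frac{m-1}{2}, \] where $q=\left\lfloor\frac{m-1}{t}\right\rfloor$ and $r=(m-1)\bmod t$.
   Context: $\mathbb{N}=\{0,1,2,\ldots\}$. $\langle A\rangle$ is the submonoid of $(\mathbb{N},+)$ generated by $A$; a numerical semigroup is a submonoid of $\mathbb{N}$ with finite complement. $\mathrm{g}(S)=|\mathbb{N}\setminus S|$ is the genus. A MANS-semigroup is a numerical semigroup with $w(1)<\cdots<w(\mathrm{m}(S)-1)$, where $\mathrm{m}(S)$ is the least element of $S\setminus\{0\}$ and $w(i)$ the least element of $S$ congruent to $i$ modulo $\mathrm{m}(S)$. $a\bmod b$ is the remainder of the division of $a$ by $b$. *)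

theory Defs
  imports Complex_Main
begin

inductive_set monoid_gen :: "nat set \<Rightarrow> nat set" for A :: "nat set" where
  zero: "0 \<in> monoid_gen A"
| add: "x \<in> monoid_gen A \<Longrightarrow> a \<in> A \<Longrightarrow> x + a \<in> monoid_gen A"

definition genus :: "nat set \<Rightarrow> nat" where
  "genus S = card (UNIV - S)"

end

theory Submission
  imports Defs Complex_Main
begin

lemma mg_char:
  "s \<in> monoid_gen {m, n1, n2} \<longleftrightarrow> (\<exists>c x y. s = c*m + x*n1 + y*n2)"
proof
  assume "s \<in> monoid_gen {m, n1, n2}"
  then show "\<exists>c x y. s = c*m + x*n1 + y*n2"
  proof induction
    case zero
    then show ?case by (rule exI[of _ 0], simp)
  next
    case (add x a)
    then obtain c u v where e: "x = c*m + u*n1 + v*n2" by blast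
    from \<open>a \<in> {m, n1, n2}\<close> consider "a = m" | "a = n1" | "a \<in> {n2}" by blast
    then show ?case
    proof cases
      assume "a = m" then show ?thesis using e by (intro exI[of _ "Suc c"] exI[of _ u] exI[of _ v]) simp
    next
      assume "a = n1" then show ?thesis using e by (intro exI[of _ "c"] exI[of _ "Suc u"] exI[of _ v]) simp
    next
      assume "a \<in> {n2}" then show ?thesis using e by (intro exI[of _ "c"] exI[of _ u] exI[of _ "Suc v"]) simp
    qed
  qed
next
  assume "\<exists>c x y. s = c*m + x*n1 + y*n2"
  then obtain c x y where s: "s = c*m + x*n1 + y*n2" by blast
  have A: "\<And>c. c*m \<in> monoid_gen {m, n1, n2}"
  proof -
    fix c show "c*m \<in> monoid_gen {m, n1, n2}"
    proof (induction c)
      case (Suc c)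
      have "c*m + m \<in> monoid_gen {m, n1, n2}" using Suc by (intro monoid_gen.add) auto
      then show ?case by (simp add: add.commute)
    qed (auto intro: monoid_gen.intros)
  qed
  have B: "\<And>x z. z \<in> monoid_gen {m, n1, n2} \<Longrightarrow> z + x*n1 \<in> monoid_gen {m, n1, n2}"
  proof -
    fix x z assume "z \<in> monoid_gen {m, n1, n2}"
    then show "z + x*n1 \<in> monoid_gen {m, n1, n2}"
    proof (induction x)
      case (Suc x)
      have "(z + x*n1) + n1 \<in> monoid_gen {m, n1, n2}" using Suc by (intro monoid_gen.add[of "z + x*n1"]) auto
      then show ?case by (simp add: algebra_simps)
    qed simp
  qed
  have C: "\<And>x z. z \<in> monoid_gen {m, n1, n2} \<Longrightarrow> z + x*n2 \<in> monoid_gen {m, n1, n2}"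
  proof -
    fix x z assume "z \<in> monoid_gen {m, n1, n2}"
    then show "z + x*n2 \<in> monoid_gen {m, n1, n2}"
    proof (induction x)
      case (Suc x)
      have "(z + x*n2) + n2 \<in> monoid_gen {m, n1, n2}" using Suc by (intro monoid_gen.add[of "z + x*n2"]) auto
      then show ?case by (simp add: algebra_simps)
    qed simp
  qed
  show "s \<in> monoid_gen {m, n1, n2}" unfolding s using A B C by blast
qed

lemma sum_mod_formula:
  fixes t :: nat assumes "t \<ge> 1"
  shows "2 * (\<Sum>i\<le>n. i mod t) = (n div t) * t * (t - 1) + (n mod t) * (n mod t + 1)"
proof (induction n)
  case 0 then show ?case by simp
next
  case (Suc n)
  have s: "2 * (\<Sum>i\<le>Suc n. i mod t) = 2 * (\<Sum>i\<le>n. i mod t) + 2 * (Suc n mod t)" by simp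
  show ?case
  proof (cases "Suc (n mod t) = t")
    case True
    then have h: "Suc n mod t = 0" "Suc n div t = Suc (n div t)" "n mod t = t - 1"
      by (simp_all add: mod_Suc div_Suc)
    have "(n div t) * t * (t - 1) + (t - 1) * (t - 1 + 1) = Suc (n div t) * t * (t - 1)"
      using assms by (simp add: algebra_simps)
    then show ?thesis unfolding s Suc.IH h by simp
  next
    case False
    then have h: "Suc n mod t = Suc (n mod t)" "Suc n div t = n div t" by (simp_all add: mod_Suc div_Suc)
    show ?thesis unfolding s Suc.IH h by (simp add: algebra_simps)
  qed
qed

lemma sum_div_formula:
  fixes t :: nat assumes "t \<ge> 1"
  shows "2 * (\<Sum>i\<le>n. i div t) = (n div t) * t * (n div t - 1) + 2 * (n div t) * (n mod t + 1)"
proof (induction n)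
  case 0 then show ?case by simp
next
  case (Suc n)
  have s: "2 * (\<Sum>i\<le>Suc n. i div t) = 2 * (\<Sum>i\<le>n. i div t) + 2 * (Suc n div t)" by simp
  show ?case
  proof (cases "Suc (n mod t) = t")
    case True
    then have h: "Suc n mod t = 0" "Suc n div t = Suc (n div t)" "n mod t = t - 1"
      by (simp_all add: mod_Suc div_Suc)
    have "(n div t) * t * (n div t - 1) + 2 * (n div t) * (t - 1 + 1) + 2 * Suc (n div t)
        = Suc (n div t) * t * (Suc (n div t) - 1) + 2 * Suc (n div t) * (0 + 1)"
      using assms by (cases "n div t") (simp_all add: algebra_simps)
    then show ?thesis unfolding s Suc.IH h by simp
  next
    case False
    then have h: "Suc n mod t = Suc (n mod t)" "Suc n div t = n div t" by (simp_all add: mod_Suc div_Suc)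
    show ?thesis unfolding s Suc.IH h by (simp add: algebra_simps)
  qed
qed

lemma fin:
  fixes a b m t X Y :: nat
  assumes m0: "m > 0" and hXY: "2*real X + 2*real t*real Y = (real m - 1) * real m"
  shows "real (a*X + b*Y) = real (2*X) / (2 * real m) * real (a * m + 1)
            + real (2*Y) / (2 * real m) * real (b * m + t) - (real m - 1) / 2"
proof -
  have mm: "real m > 0" using m0 by simp
  have "real (2*X) / (2 * real m) * real (a * m + 1) + real (2*Y) / (2 * real m) * real (b * m + t)
      = (2*real X*(real a*real m+1) + 2*real Y*(real b*real m + real t)) / (2*real m)"
    using mm by (simp add: field_simps)
  also have "2*real X*(real a*real m+1) + 2*real Y*(real b*real m + real t)
      = 2*real m*(real a*real X + real b*real Y) + (2*real X + 2*real t*real Y)"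
    by (simp add: algebra_simps)
  also have "\<dots> = 2*real m*(real a*real X + real b*real Y + (real m - 1)/2)"
    unfolding hXY by (simp add: field_simps)
  also have "\<dots> / (2*real m) = real a*real X + real b*real Y + (real m - 1)/2"
    using mm by simp
  finally show ?thesis by simp
qed

theorem proposition3p13:
  fixes m a b t :: nat
  assumes "m \<ge> 3" and "a \<ge> 1" and "2 \<le> t" and "t \<le> m - 1"
    and "(t - 1) * (a * m + 1) < b * m + t" and "b * m + t < t * (a * m + 1)"
  shows "let S = monoid_gen {m, a * m + 1, b * m + t};
             q = (m - 1) div t; r = (m - 1) mod t
         in real (genus S) =
              real (q * t * (t - 1) + r * (r + 1)) / (2 * real m) * real (a * m + 1)
            + real (q * t * (q - 1) + 2 * q * (r + 1)) / (2 * real m) * real (b * m + t)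
            - (real m - 1) / 2"
proof -
  define n1 where "n1 = a*m+1"
  define n2 where "n2 = b*m+t"
  define S where "S = monoid_gen {m, n1, n2}"
  define f where "f N = (N mod t)*n1 + (N div t)*n2" for N
  define g where "g N = (N mod t)*a + (N div t)*b" for N
  have t0: "t > 0" using assms by simp
  have m0: "m > 0" using assms by simp
  have fg: "f N = m * g N + N" for N
  proof -
    have "N = N mod t + t * (N div t)" by simp
    then have "f N = m * g N + (N mod t + t * (N div t))"
      unfolding f_def g_def n1_def n2_def by (simp add: algebra_simps)
    then show ?thesis by simp
  qed
  have le1: "(t-1)*n1 \<le> n2" and le2: "n2 \<le> t*n1" using assms unfolding n1_def n2_def by linarith+
  have fA: "f (x + y*t) \<le> x*n1 + y*n2" for x y
  proof -
    have e1: "(x + y*t) mod t = x mod t" by simp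
    have e2: "(x + y*t) div t = y + x div t" using t0 by simp
    have x: "x*n1 = (x mod t)*n1 + (x div t)*(t*n1)"
      by (metis add.commute mult.assoc mult.commute div_mult_mod_eq distrib_right)
    have "(x div t)*n2 \<le> (x div t)*(t*n1)" using le2 by simp
    then show ?thesis unfolding f_def e1 e2 x by (simp add: algebra_simps)
  qed
  have fsuc: "f N \<le> f (Suc N)" for N
  proof (cases "Suc (N mod t) = t")
    case True
    then have "Suc N mod t = 0" "Suc N div t = Suc (N div t)" by (simp_all add: mod_Suc div_Suc)
    moreover have "N mod t = t - 1" using True by simp
    ultimately show ?thesis unfolding f_def using le1 by simp
  next
    case False
    then have "Suc N mod t = Suc (N mod t)" "Suc N div t = N div t" by (simp_all add: mod_Suc div_Suc)
    then show ?thesis unfolding f_def by simp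
  qed
  have fmono: "N \<le> M \<Longrightarrow> f N \<le> f M" for N M
    using fsuc by (rule lift_Suc_mono_le)
  have memS: "s \<in> S \<longleftrightarrow> g (s mod m) \<le> s div m" for s
  proof
    assume "s \<in> S"
    then obtain c x y where s: "s = c*m + x*n1 + y*n2" unfolding S_def mg_char by blast
    have "s = m*(c + x*a + y*b) + (x + y*t)" unfolding s n1_def n2_def by (simp add: algebra_simps)
    then have "s mod m = (x + y*t) mod m" by simp
    then have "s mod m \<le> x + y*t" by simp
    then have "f (s mod m) \<le> s" using fmono fA s by (meson le_add2 le_trans add_le_mono order_refl
         add.assoc)
    moreover have "s = m * (s div m) + s mod m" by simp
    ultimately have "m * g (s mod m) \<le> m * (s div m)" unfolding fg by linarith
    then show "g (s mod m) \<le> s div m" using m0 by simp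
  next
    assume h: "g (s mod m) \<le> s div m"
    define i where "i = s mod m"
    have "s = (s div m - g i)*m + (m * g i + i)"
      using h unfolding i_def by (simp add: algebra_simps)
    also have "m * g i + i = (i mod t)*n1 + (i div t)*n2" using fg[of i] f_def by simp
    finally show "s \<in> S" unfolding S_def mg_char by (metis add.assoc)
  qed
  have gaps: "UNIV - S = (\<lambda>(i,k). k*m + i) ` (SIGMA i:{..<m}. {..<g i})"
  proof (rule set_eqI, rule iffI)
    fix s assume "s \<in> UNIV - S"
    then have "s div m < g (s mod m)" using memS by auto
    moreover have "s = (s div m)*m + s mod m" by simp
    ultimately show "s \<in> (\<lambda>(i,k). k*m + i) ` (SIGMA i:{..<m}. {..<g i})"
      using m0 by (intro image_eqI[of _ _ "(s mod m, s div m)"]) auto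
  next
    fix s assume "s \<in> (\<lambda>(i,k). k*m + i) ` (SIGMA i:{..<m}. {..<g i})"
    then obtain i k where "i < m" "k < g i" "s = k*m + i" by auto
    then have "s div m = k" "s mod m = i" by simp_all
    then show "s \<in> UNIV - S" using memS \<open>k < g i\<close> by auto
  qed
  have inj: "inj_on (\<lambda>(i,k). k*m + i) (SIGMA i:{..<m}. {..<g i})"
  proof (rule inj_onI, clarsimp)
    fix i k i' k' assume "i < m" "i' < m" "k*m + i = k'*m + i'"
    then have "(k*m+i) div m = (k'*m+i') div m" "(k*m+i) mod m = (k'*m+i') mod m" by simp_all
    then show "i = i' \<and> k = k'" using \<open>i < m\<close> \<open>i' < m\<close> by simp
  qed
  have gen: "genus S = (\<Sum>i<m. g i)"
    unfolding genus_def gaps card_image[OF inj] by (simp add: card_SigmaI)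
  define X where "X = (\<Sum>i<m. i mod t)"
  define Y where "Y = (\<Sum>i<m. i div t)"
  have lm: "{..<m} = {..m-1}" using m0 by auto
  have gen2: "genus S = a*X + b*Y" unfolding gen g_def X_def Y_def
    by (simp add: sum.distrib sum_distrib_left mult.commute)
  define q where "q = (m - 1) div t"
  define r where "r = (m - 1) mod t"
  have hX: "2*X = q * t * (t - 1) + r * (r + 1)" unfolding X_def lm q_def r_def
    using sum_mod_formula t0 by simp
  have hY: "2*Y = q * t * (q - 1) + 2 * q * (r + 1)" unfolding Y_def lm q_def r_def
    using sum_div_formula t0 by simp
  have "X + t*Y = (\<Sum>i<m. i mod t + t * (i div t))" unfolding X_def Y_def
    by (simp only: sum.distrib sum_distrib_left)
  also have "\<dots> = (\<Sum>i\<le>m-1. i)" unfolding lm by (simp only: mod_mult_div_eq)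
  also have "\<dots> = (\<Sum>{0..m-1})" by (simp add: atLeast0AtMost)
  finally have "X + t*Y = ((m-1) * Suc (m-1)) div 2" using gauss_sum_nat by simp
  then have "2*(X + t*Y) = (m-1)*m" using m0 by (simp add: mult.commute)
  then have "real (2*(X + t*Y)) = real ((m-1)*m)" by (simp only:)
  then have hXY: "2*real X + 2*real t*real Y = (real m - 1) * real m"
    using m0 by (simp add: of_nat_diff Suc_leI algebra_simps)
  have "real (genus S) =
              real (2*X) / (2 * real m) * real (a * m + 1)
            + real (2*Y) / (2 * real m) * real (b * m + t)
            - (real m - 1) / 2"
    unfolding gen2 by (rule fin[OF m0 hXY])
  then show ?thesis unfolding hX hY S_def n1_def n2_def q_def r_def Let_def .
qed

end
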